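(* For all sufficiently large $n$, the modified multi-phase process described in the context returns an element of $S^-_{3/4}$ with probability at least $1-2^{-n/5}$.
   Context: Let $n\ge2$ be an integer such that $m=n/\log_2 n$ is an integer, and let $S'$ be a set of $m$ distinct elements of a totally ordered set. For $\rho\in(0,1]$, $S^-_\rho$ denotes the set of the $\lceil \rho m\rceil$ smallest elements of $S'$ and $S^+_\rho=S'\setminus S^-_\rho$. There are two oracles $\mathcal{O}_1,\mathcal{O}_2$ which can be queried with an element $x\in S'$ and answer "relevant" or "not relevant" in constant time, all answers being mutually independent; for constants $p_1,p_2\in[0,\tfrac12)$: $\mathcal{O}_1$ reports $x$ relevant with probability at least $1-p_1$ if $x\in S^-_{1/6}$ and at most $p_1$ if $x\in S^+_{1/3}$; $\mathcal{O}_2$ reports $x$ relevant with probability at least $1-p_2$ if $x\in S^-_{1/3}$ and at most $p_2$ if $x\in S^+_{3/4}$. For $q\in[0,\tfrac12)$ let $c_q=\lceil 4(1-q)/(1-2q)^2\rceil$. Let $\eta = 1+\lceil \log_2 \frac{n}{\log_2 n}\rceil$. Modified multi-phase process: the elements of $S'$ are considered one at a time. For the current element $x$, a preliminary test is performed consisting of $8c_{p_1}\lceil \ln n\rceil+1$ queries to $\mathcal{O}_1$ on $x$; it is passed if the majority report $x$ relevant, otherwise $x$ is discarded and the next element is considered. Then, for $i=1,\dots,\eta$, the $i$-th test consists of $2\lceil 2^i\ln n\rceil c_{p_2}+1$ queries to $\mathcal{O}_2$ on $x$ and is passed if the majority report $x$ relevant; if $x$ fails a test it is discarded and the next element is considered.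 The process returns the first element that passes the $\eta$-th test (if no element does, it returns nothing, which counts as not returning an element of $S^-_{3/4}$). Here $\ln$ is the natural logarithm. *)

theory Defs
  imports "HOL-Probability.Probability"
begin

text \<open>S^-_rho: the ceil(rho m) smallest elements of S (m = card S); S^+_rho its complement in S.\<close>
definition Sminus :: "real \<Rightarrow> 'a::linorder set \<Rightarrow> 'a set" where
  "Sminus \<rho> S = {x\<in>S. card {y\<in>S. y < x} < nat \<lceil>\<rho> * real (card S)\<rceil>}"

definition Splus :: "real \<Rightarrow> 'a::linorder set \<Rightarrow> 'a set" where
  "Splus \<rho> S = S - Sminus \<rho> S"

definition cq :: "real \<Rightarrow> nat" where
  "cq q = nat \<lceil>4 * (1 - q) / (1 - 2 * q)^2\<rceil>"

definition maj_test :: "nat \<Rightarrow> real \<Rightarrow> bool pmf" where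
  "maj_test k p = map_pmf (\<lambda>c. k < 2 * c) (binomial_pmf k p)"

fun run_tests :: "(nat \<times> real) list \<Rightarrow> bool pmf" where
  "run_tests [] = return_pmf True"
| "run_tests ((k, p) # ts) = maj_test k p \<bind> (\<lambda>b. if b then run_tests ts else return_pmf False)"

fun multi_phase :: "('a \<Rightarrow> (nat \<times> real) list) \<Rightarrow> 'a list \<Rightarrow> 'a option pmf" where
  "multi_phase T [] = return_pmf None"
| "multi_phase T (x # xs) = run_tests (T x) \<bind> (\<lambda>b. if b then return_pmf (Some x) else multi_phase T xs)"

definition prelim_size :: "nat \<Rightarrow> real \<Rightarrow> nat" where
  "prelim_size n p1 = 8 * cq p1 * nat \<lceil>ln (real n)\<rceil> + 1"

definition phase_size :: "nat \<Rightarrow> real \<Rightarrow> nat \<Rightarrow> nat" where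
  "phase_size n p2 i = 2 * nat \<lceil>2 ^ i * ln (real n)\<rceil> * cq p2 + 1"

definition eta :: "nat \<Rightarrow> nat" where
  "eta n = 1 + nat \<lceil>log 2 (real n / log 2 (real n))\<rceil>"

text \<open>Tests for element x: preliminary test with O1 (probability a1 x), then tests 1..eta with O2.\<close>
definition mod_tests :: "nat \<Rightarrow> real \<Rightarrow> real \<Rightarrow> ('a \<Rightarrow> real) \<Rightarrow> ('a \<Rightarrow> real) \<Rightarrow> 'a \<Rightarrow> (nat \<times> real) list" where
  "mod_tests n p1 p2 a1 a2 x =
     (prelim_size n p1, a1 x) # map (\<lambda>i. (phase_size n p2 i, a2 x)) [1..<eta n + 1]"

end

theory Submission imports Defs "HOL-Real_Asymp.Real_Asymp" begin

lemma prob_bind_bool: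
  fixes M :: "bool pmf"
  shows "measure_pmf.prob (M \<bind> f) X = pmf M True * measure_pmf.prob (f True) X + pmf M False * measure_pmf.prob (f False) X"
proof -
  have "measure_pmf.prob (M \<bind> f) X = (\<integral>b. measure_pmf.prob (f b) X \<partial>M)"
    unfolding measure_pmf_bind
    by (rule measure_pmf.measure_bind[where N="count_space UNIV"]) (auto simp: measure_pmf_in_subprob_algebra)
  also have "\<dots> = (\<Sum>b\<in>UNIV. measure_pmf.prob (f b) X * pmf M b)"
    by (rule integral_measure_pmf_real) auto
  finally show ?thesis by (simp add: UNIV_bool algebra_simps)
qed

lemma run_tests_True:
  "pmf (run_tests ts) True = prod_list (map (\<lambda>(k,p). pmf (maj_test k p) True) ts)"
proof (induction ts)
  case Nil
  then show ?case by simp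
next
  case (Cons t ts)
  obtain k p where t: "t = (k,p)" by force
  have "pmf (run_tests (t # ts)) True = measure_pmf.prob (run_tests (t # ts)) {True}"
    by (simp add: measure_pmf_single)
  also have "\<dots> = pmf (maj_test k p) True * pmf (run_tests ts) True"
    unfolding t run_tests.simps prob_bind_bool by (simp add: measure_pmf_single)
  finally show ?case using Cons t by simp
qed

lemma multi_phase_step:
  "measure_pmf.prob (multi_phase T (x # xs)) (Some ` A) =
     pmf (run_tests (T x)) True * (if x \<in> A then 1 else 0)
     + (1 - pmf (run_tests (T x)) True) * measure_pmf.prob (multi_phase T xs) (Some ` A)"
  unfolding multi_phase.simps prob_bind_bool
  by (simp add: pmf_False_conv_True image_iff)

lemma multi_phase_bound:
  assumes "distinct xs" "G \<subseteq> A"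
  shows "1 - measure_pmf.prob (multi_phase T xs) (Some ` A) \<le>
    (\<Sum>x\<in>set xs - A. pmf (run_tests (T x)) True) + (\<Prod>x\<in>set xs \<inter> G. 1 - pmf (run_tests (T x)) True)"
  using assms(1)
proof (induction xs)
  case Nil
  then show ?case by simp
next
  case (Cons x xs)
  define f where "f = pmf (run_tests (T x)) True"
  define Q where "Q = 1 - measure_pmf.prob (multi_phase T xs) (Some ` A)"
  define S where "S = (\<Sum>x\<in>set xs - A. pmf (run_tests (T x)) True)"
  define P where "P = (\<Prod>x\<in>set xs \<inter> G. 1 - pmf (run_tests (T x)) True)"
  have Q0: "0 \<le> Q" unfolding Q_def by (simp add: measure_pmf.prob_le_1)
  have IH: "Q \<le> S + P" using Cons unfolding Q_def S_def P_def by simp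
  have f01: "0 \<le> f" "f \<le> 1" unfolding f_def by (auto simp: pmf_le_1)
  have S0: "0 \<le> S" unfolding S_def by (auto intro: sum_nonneg)
  have P0: "0 \<le> P" unfolding P_def by (auto intro!: prod_nonneg simp: pmf_le_1)
  have xn: "x \<notin> set xs" using Cons by simp
  have step: "1 - measure_pmf.prob (multi_phase T (x # xs)) (Some ` A) =
     f * (if x \<in> A then 0 else 1) + (1 - f) * Q"
    unfolding multi_phase_step f_def Q_def by (simp add: algebra_simps)
  show ?case
  proof (cases "x \<in> A")
    case False
    then have xG: "x \<notin> G" using assms(2) by auto
    have "set (x # xs) - A = insert x (set xs - A)" using False by auto
    then have s: "(\<Sum>x\<in>set (x # xs) - A. pmf (run_tests (T x)) True) = f + S"
      unfolding S_def f_def using xn by simp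
    have p: "(\<Prod>x\<in>set (x # xs) \<inter> G. 1 - pmf (run_tests (T x)) True) = P"
      unfolding P_def using xG by (simp add: Int_insert_left)
    have "(1 - f) * Q \<le> Q" using f01 Q0 
      using mult_right_mono[of "1 - f" 1 Q] by simp
    have "1 - measure_pmf.prob (multi_phase T (x # xs)) (Some ` A) = f + (1 - f) * Q"
      using step False by simp
    then show ?thesis unfolding s p using \<open>(1 - f) * Q \<le> Q\<close> IH by linarith
  next
    case True
    have s: "(\<Sum>x\<in>set (x # xs) - A. pmf (run_tests (T x)) True) = S"
      unfolding S_def using True by simp
    show ?thesis
    proof (cases "x \<in> G")
      case True
      have p: "(\<Prod>x\<in>set (x # xs) \<inter> G. 1 - pmf (run_tests (T x)) True) = (1 - f) * P"
        unfolding P_def f_def using True xn by (simp add: Int_insert_left)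
      have "(1 - f) * Q \<le> (1 - f) * (S + P)" using IH f01 by (intro mult_left_mono) auto
      also have "\<dots> \<le> S + (1 - f) * P" using f01 S0 P0 by (simp add: algebra_simps mult_nonneg_nonneg)
      finally have "(1 - f) * Q \<le> S + (1 - f) * P" .
      moreover have "1 - measure_pmf.prob (multi_phase T (x # xs)) (Some ` A) = (1 - f) * Q"
        using step \<open>x \<in> A\<close> by simp
      ultimately show ?thesis unfolding s p by linarith
    next
      case False
      have p: "(\<Prod>x\<in>set (x # xs) \<inter> G. 1 - pmf (run_tests (T x)) True) = P"
        unfolding P_def using False by (simp add: Int_insert_left)
      have "(1 - f) * Q \<le> Q" using f01 Q0
        using mult_right_mono[of "1 - f" 1 Q] by simp
      moreover have "1 - measure_pmf.prob (multi_phase T (x # xs)) (Some ` A) = (1 - f) * Q"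
        using step \<open>x \<in> A\<close> by simp
      ultimately show ?thesis unfolding s p using IH by linarith
    qed
  qed
qed

lemma maj_hi:
  assumes "0 \<le> p" "p \<le> q" "q < 1/2" "k > 0"
  shows "pmf (maj_test k p) True \<le> exp (- real k * (1 - 2*q)^2 / 2)"
proof -
  interpret binomial_distribution k p by unfold_locales (use assms in auto)
  have "pmf (maj_test k p) True = measure_pmf.prob (binomial_pmf k p) {c. k < 2 * c}"
    unfolding maj_test_def pmf_map by (simp add: vimage_def)
  also have "\<dots> \<le> measure_pmf.prob (binomial_pmf k p) {x. real x / real k \<ge> p + (1/2 - p)}"
    using assms(4) by (intro measure_pmf.finite_measure_mono) (auto simp: field_simps)
  also have "\<dots> \<le> exp (real_of_int (- 2 * int k) * (1/2 - p)^2)"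
    by (rule prob_ge') (use assms in auto)
  also have "\<dots> = exp (-2 * real k * (1/2 - p)^2)" by simp
  also have "\<dots> \<le> exp (- real k * (1 - 2*q)^2 / 2)"
  proof -
    have "(1/2 - q)^2 \<le> (1/2 - p)^2" using assms by (intro power_mono) auto
    then have "real k * (1/2 - q)^2 \<le> real k * (1/2 - p)^2"
      by (intro mult_left_mono) auto
    moreover have "real k * (1 - 2*q)^2 / 2 = 2 * (real k * (1/2 - q)^2)"
      by (simp add: power2_eq_square field_simps)
    ultimately have "real k * (1 - 2*q)^2 / 2 \<le> 2 * (real k * (1/2 - p)^2)" by linarith
    then show ?thesis by (simp add: mult.assoc)
  qed
  finally show ?thesis .
qed

lemma maj_lo:
  assumes "1 - q \<le> p" "p \<le> 1" "0 \<le> q" "q < 1/2" "k > 0"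
  shows "pmf (maj_test k p) False \<le> exp (- real k * (1 - 2*q)^2 / 2)"
proof -
  interpret binomial_distribution k p by unfold_locales (use assms in auto)
  have "pmf (maj_test k p) False = measure_pmf.prob (binomial_pmf k p) {c. \<not> k < 2 * c}"
    unfolding maj_test_def pmf_map by (simp add: vimage_def)
  also have "\<dots> \<le> measure_pmf.prob (binomial_pmf k p) {x. real x / real k \<le> p - (p - 1/2)}"
    using assms(5) by (intro measure_pmf.finite_measure_mono) (auto simp: field_simps)
  also have "\<dots> \<le> exp (real_of_int (- 2 * int k) * (p - 1/2)^2)"
    by (rule prob_le') (use assms in auto)
  also have "\<dots> = exp (-2 * real k * (p - 1/2)^2)" by simp
  also have "\<dots> \<le> exp (- real k * (1 - 2*q)^2 / 2)"
  proof -
    have "(1/2 - q)^2 \<le> (p - 1/2)^2" using assms by (intro power_mono) auto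
    then have "real k * (1/2 - q)^2 \<le> real k * (p - 1/2)^2"
      by (intro mult_left_mono) auto
    moreover have "real k * (1 - 2*q)^2 / 2 = 2 * (real k * (1/2 - q)^2)"
      by (simp add: power2_eq_square field_simps)
    ultimately have "real k * (1 - 2*q)^2 / 2 \<le> 2 * (real k * (p - 1/2)^2)" by linarith
    then show ?thesis by (simp add: mult.assoc)
  qed
  finally show ?thesis .
qed

lemma cq_bound:
  assumes "0 \<le> q" "q < 1/2"
  shows "real (cq q) * (1 - 2*q)^2 / 2 \<ge> 1"
proof -
  have d: "(1 - 2*q)^2 > 0" using assms by simp
  have "real (cq q) \<ge> 4 * (1 - q) / (1 - 2 * q)^2"
    unfolding cq_def by linarith
  then have "real (cq q) * (1 - 2*q)^2 \<ge> 4 * (1 - q)"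
    using d by (simp add: field_simps)
  then show ?thesis using assms by (simp add: field_simps)
qed

lemma Sminus_mono:
  assumes "\<rho> \<le> \<sigma>"
  shows "Sminus \<rho> S \<subseteq> Sminus \<sigma> S"
proof -
  have "\<rho> * real (card S) \<le> \<sigma> * real (card S)" using assms by (intro mult_right_mono) auto
  then have "\<lceil>\<rho> * real (card S)\<rceil> \<le> \<lceil>\<sigma> * real (card S)\<rceil>"
    by (rule ceiling_mono)
  then have "nat \<lceil>\<rho> * real (card S)\<rceil> \<le> nat \<lceil>\<sigma> * real (card S)\<rceil>"
    by (rule nat_mono)
  then show ?thesis unfolding Sminus_def by (blast intro: order_less_le_trans)
qed

lemma Splus_anti:
  assumes "\<rho> \<le> \<sigma>"
  shows "Splus \<sigma> S \<subseteq> Splus \<rho> S"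
  using Sminus_mono[OF assms, of S] unfolding Splus_def by auto

lemma card_Sminus:
  fixes S :: "'a::linorder set"
  assumes "finite S"
  shows "card (Sminus \<rho> S) = min (card S) (nat \<lceil>\<rho> * real (card S)\<rceil>)"
proof -
  define r where "r x = card {y\<in>S. y < x}" for x
  define K where "K = nat \<lceil>\<rho> * real (card S)\<rceil>"
  have lt: "r x < r y" if "x \<in> S" "y \<in> S" "x < y" for x y
  proof -
    have "{z\<in>S. z < x} \<subset> {z\<in>S. z < y}" using that by auto
    then show ?thesis unfolding r_def using assms by (intro psubset_card_mono) auto
  qed
  have inj: "inj_on r S"
  proof (rule inj_onI)
    fix x y assume "x \<in> S" "y \<in> S" "r x = r y"
    then show "x = y" using lt[of x y] lt[of y x] by (cases x y rule: linorder_cases) auto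
  qed
  have sub: "r ` S \<subseteq> {..<card S}"
  proof
    fix i assume "i \<in> r ` S"
    then obtain x where x: "x \<in> S" "i = r x" by auto
    have "{y\<in>S. y < x} \<subset> S" using x by auto
    then have "r x < card S" unfolding r_def using assms by (intro psubset_card_mono) auto
    then show "i \<in> {..<card S}" using x by simp
  qed
  have img: "r ` S = {..<card S}"
    using sub inj by (intro card_subset_eq) (auto simp: card_image)
  have eq: "Sminus \<rho> S = {x\<in>S. r x < K}" unfolding Sminus_def r_def K_def by simp
  have "r ` {x\<in>S. r x < K} = {i\<in>r ` S. i < K}" by auto
  also have "\<dots> = {..<min (card S) K}" using img by auto
  finally have "card (r ` {x\<in>S. r x < K}) = min (card S) K" by simp
  moreover have "inj_on r {x\<in>S. r x < K}" using inj by (rule inj_on_subset) auto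
  ultimately show ?thesis unfolding eq K_def by (simp add: card_image)
qed

lemma prod_list_01:
  assumes "\<forall>u\<in>set l. 0 \<le> u \<and> u \<le> (1::real)"
  shows "0 \<le> prod_list l \<and> prod_list l \<le> 1"
  using assms by (induction l) (auto intro: mult_le_one)

lemma prod_list_le_member:
  assumes "v \<in> set l" "\<forall>u\<in>set l. 0 \<le> u \<and> u \<le> (1::real)"
  shows "prod_list l \<le> v"
  using assms
proof (induction l)
  case Nil then show ?case by simp
next
  case (Cons a l)
  have p01: "0 \<le> prod_list l" "prod_list l \<le> 1" using Cons.prems(2)
    using prod_list_01 by auto
  show ?case
  proof (cases "v = a")
    case True
    then show ?thesis using p01 Cons.prems(2) by (simp add: mult_left_le)
  next
    case False
    then have "prod_list l \<le> v" using Cons by auto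
    then show ?thesis using Cons.prems(2) p01 by simp (meson mult_left_le_one_le order_trans)
  qed
qed

lemma one_minus_prod_list:
  assumes "\<forall>u\<in>set l. 0 \<le> u \<and> u \<le> (1::real)"
  shows "1 - prod_list l \<le> sum_list (map (\<lambda>u. 1 - u) l)"
  using assms
proof (induction l)
  case Nil then show ?case by simp
next
  case (Cons a l)
  have p01: "0 \<le> prod_list l" "prod_list l \<le> 1" using Cons.prems
    using prod_list_01 by auto
  have a: "0 \<le> a" "a \<le> 1" using Cons.prems by auto
  have "1 - a * prod_list l \<le> (1 - a) + (1 - prod_list l)"
  proof -
    have "0 \<le> (1 - a) * (1 - prod_list l)" using a p01 by simp
    then have "0 \<le> 1 - a - prod_list l + a * prod_list l" by (simp add: algebra_simps)
    then show ?thesis by linarith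
  qed
  then show ?case using Cons by simp
qed

lemma maj_hi':
  assumes "0 \<le> p" "p \<le> q" "q < 1/2" "k > 0" "B \<le> real k * (1 - 2*q)^2 / 2"
  shows "pmf (maj_test k p) True \<le> exp (- B)"
proof -
  have "pmf (maj_test k p) True \<le> exp (- real k * (1 - 2*q)^2 / 2)"
    using maj_hi assms by blast
  also have "\<dots> = exp (- (real k * (1 - 2*q)^2 / 2))" by simp
  also have "\<dots> \<le> exp (- B)" using assms(5) by simp
  finally show ?thesis .
qed

lemma maj_lo':
  assumes "1 - q \<le> p" "p \<le> 1" "0 \<le> q" "q < 1/2" "k > 0" "B \<le> real k * (1 - 2*q)^2 / 2"
  shows "1 - pmf (maj_test k p) True \<le> exp (- B)"
proof -
  have "1 - pmf (maj_test k p) True = pmf (maj_test k p) False" by (simp add: pmf_False_conv_True)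
  also have "\<dots> \<le> exp (- real k * (1 - 2*q)^2 / 2)"
    using maj_lo assms by blast
  also have "\<dots> = exp (- (real k * (1 - 2*q)^2 / 2))" by simp
  also have "\<dots> \<le> exp (- B)" using assms(6) by simp
  finally show ?thesis .
qed

lemma phase_exp:
  assumes "n \<ge> 1" "0 \<le> q" "q < 1/2"
  shows "2 * 2^i * ln (real n) \<le> real (phase_size n q i) * (1 - 2*q)^2 / 2"
proof -
  have ln0: "ln (real n) \<ge> 0" using assms by simp
  define t where "t = 2^i * ln (real n)"
  have t0: "t \<ge> 0" unfolding t_def using ln0 by simp
  have cd: "real (cq q) * (1 - 2*q)^2 / 2 \<ge> 1" using cq_bound assms by blast
  have "real (phase_size n q i) = 2 * real (nat \<lceil>t\<rceil>) * real (cq q) + 1"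
    unfolding phase_size_def t_def by simp
  moreover have "real (nat \<lceil>t\<rceil>) \<ge> t" by linarith
  ultimately have "real (phase_size n q i) \<ge> 2 * t * real (cq q)"
    by (smt (verit, ccfv_SIG) mult_right_mono of_nat_0_le_iff)
  then have "real (phase_size n q i) * (1 - 2*q)^2 / 2 \<ge> 2 * t * real (cq q) * (1 - 2*q)^2 / 2"
    by (intro divide_right_mono mult_right_mono) auto
  also have "2 * t * real (cq q) * (1 - 2*q)^2 / 2 = 2 * t * (real (cq q) * (1 - 2*q)^2 / 2)"
    by simp
  also have "\<dots> \<ge> 2 * t * 1" using cd t0 by (intro mult_left_mono) auto
  finally show ?thesis unfolding t_def by simp
qed

lemma prelim_exp:
  assumes "n \<ge> 1" "0 \<le> q" "q < 1/2"
  shows "8 * ln (real n) \<le> real (prelim_size n q) * (1 - 2*q)^2 / 2"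
proof -
  have ln0: "ln (real n) \<ge> 0" using assms by simp
  define t where "t = ln (real n)"
  have t0: "t \<ge> 0" unfolding t_def using ln0 by simp
  have cd: "real (cq q) * (1 - 2*q)^2 / 2 \<ge> 1" using cq_bound assms by blast
  have "real (prelim_size n q) = 8 * real (cq q) * real (nat \<lceil>t\<rceil>) + 1"
    unfolding prelim_size_def t_def by simp
  moreover have "real (nat \<lceil>t\<rceil>) \<ge> t" by linarith
  then have "t * real (cq q) \<le> real (nat \<lceil>t\<rceil>) * real (cq q)" by (rule mult_right_mono) auto
  ultimately have "real (prelim_size n q) \<ge> 8 * t * real (cq q)"
    by (simp add: algebra_simps)
  then have "real (prelim_size n q) * (1 - 2*q)^2 / 2 \<ge> 8 * t * real (cq q) * (1 - 2*q)^2 / 2"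
    by (intro divide_right_mono mult_right_mono) auto
  also have "8 * t * real (cq q) * (1 - 2*q)^2 / 2 = 8 * t * (real (cq q) * (1 - 2*q)^2 / 2)"
    by simp
  also have "\<dots> \<ge> 8 * t * 1" using cd t0 by (intro mult_left_mono) auto
  finally show ?thesis unfolding t_def by simp
qed

theorem lemma16:
  fixes p1 p2 :: real
  assumes "0 \<le> p1" "p1 < 1/2" "0 \<le> p2" "p2 < 1/2"
  shows "\<exists>N::nat. \<forall>n\<ge>N. \<forall>(xs :: 'a::linorder list) (a1 :: 'a \<Rightarrow> real) (a2 :: 'a \<Rightarrow> real) (m :: nat).
     n \<ge> 2 \<longrightarrow> real m = real n / log 2 (real n) \<longrightarrow>
     distinct xs \<longrightarrow> length xs = m \<longrightarrow>
     (\<forall>x\<in>set xs. 0 \<le> a1 x \<and> a1 x \<le> 1 \<and> 0 \<le> a2 x \<and> a2 x \<le> 1) \<longrightarrow>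
     (\<forall>x\<in>Sminus (1/6) (set xs). a1 x \<ge> 1 - p1) \<longrightarrow>
     (\<forall>x\<in>Splus (1/3) (set xs). a1 x \<le> p1) \<longrightarrow>
     (\<forall>x\<in>Sminus (1/3) (set xs). a2 x \<ge> 1 - p2) \<longrightarrow>
     (\<forall>x\<in>Splus (3/4) (set xs). a2 x \<le> p2) \<longrightarrow>
     measure_pmf.prob (multi_phase (mod_tests n p1 p2 a1 a2) xs) (Some ` Sminus (3/4) (set xs))
       \<ge> 1 - 2 powr (- real n / 5)"
proof -
  have "eventually (\<lambda>n::nat. real n powr -8 + (2 + log 2 (real n)) * real n powr -4 \<le> real n powr -2) at_top"
    by real_asymp
  moreover have "eventually (\<lambda>n::nat. real n * 2 powr (-4 * real n) + 2 powr (- real n / 3) \<le> 2 powr (- real n / 5)) at_top"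
    by real_asymp
  ultimately have "eventually (\<lambda>n::nat. real n powr -8 + (2 + log 2 (real n)) * real n powr -4 \<le> real n powr -2
      \<and> real n * 2 powr (-4 * real n) + 2 powr (- real n / 3) \<le> 2 powr (- real n / 5)) at_top"
    by (rule eventually_conj)
  then obtain N where N: "\<And>n. n \<ge> N \<Longrightarrow> real n powr -8 + (2 + log 2 (real n)) * real n powr -4 \<le> real n powr -2
      \<and> real n * 2 powr (-4 * real n) + 2 powr (- real n / 3) \<le> 2 powr (- real n / 5)"
    unfolding eventually_at_top_linorder by blast
  show ?thesis
  proof (intro exI allI impI)
    fix n :: nat and xs :: "'a list" and a1 a2 :: "'a \<Rightarrow> real" and m :: nat
    assume nN: "n \<ge> N" and n2: "n \<ge> 2" and mdef: "real m = real n / log 2 (real n)"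
      and dist: "distinct xs" and len: "length xs = m"
      and a01: "\<forall>x\<in>set xs. 0 \<le> a1 x \<and> a1 x \<le> 1 \<and> 0 \<le> a2 x \<and> a2 x \<le> 1"
      and h1: "\<forall>x\<in>Sminus (1/6) (set xs). a1 x \<ge> 1 - p1"
      and h2: "\<forall>x\<in>Splus (1/3) (set xs). a1 x \<le> p1"
      and h3: "\<forall>x\<in>Sminus (1/3) (set xs). a2 x \<ge> 1 - p2"
      and h4: "\<forall>x\<in>Splus (3/4) (set xs). a2 x \<le> p2"
    have E1: "real n powr -8 + (2 + log 2 (real n)) * real n powr -4 \<le> real n powr -2"
      and E2: "real n * 2 powr (-4 * real n) + 2 powr (- real n / 3) \<le> 2 powr (- real n / 5)"
      using N[OF nN] by auto
    define S where "S = set xs"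
    define A where "A = Sminus (3/4) S"
    define G where "G = Sminus (1/6) S"
    define T where "T = mod_tests n p1 p2 a1 a2"
    define pass where "pass x = pmf (run_tests (T x)) True" for x
    define \<eta> where "\<eta> = eta n"
    define L where "L = log 2 (real n)"
    have nr: "real n \<ge> 2" using n2 by simp
    have L1: "L \<ge> 1" unfolding L_def using nr by simp
    have lnpos: "ln (real n) > 0" using nr by simp
    have mpos: "real m > 0" using mdef L1 nr unfolding L_def by simp
    have mle: "real m \<le> real n"
    proof -
      have "real n / L \<le> real n / 1" using L1 nr by (intro divide_left_mono) auto
      then show ?thesis using mdef unfolding L_def by simp
    qed
    have mln: "real m * ln (real n) = real n * ln 2"
      using mdef unfolding log_def using lnpos by (simp add: field_simps)
    have cardS: "card S = m" unfolding S_def using dist len by (simp add: distinct_card)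
    have finS: "finite S" unfolding S_def by simp
    have GA: "G \<subseteq> A" unfolding G_def A_def by (rule Sminus_mono) simp
    have eta_eq: "\<eta> = 1 + nat \<lceil>log 2 (real m)\<rceil>" unfolding \<eta>_def eta_def mdef ..
    have eta1: "\<eta> \<ge> 1" unfolding eta_eq by simp
    have eta_pow: "2 ^ \<eta> \<ge> 2 * real m"
    proof -
      have "real m = 2 powr (log 2 (real m))" using mpos by simp
      also have "\<dots> \<le> 2 powr (real (nat \<lceil>log 2 (real m)\<rceil>))" by (intro powr_mono) (auto, linarith)
      also have "\<dots> = 2 ^ (nat \<lceil>log 2 (real m)\<rceil>)" by (simp add: powr_realpow)
      finally show ?thesis unfolding eta_eq by simp
    qed
    have eta_le: "real \<eta> \<le> 2 + L"
    proof -
      have "log 2 (real m) \<le> L" unfolding L_def using mle mpos by simp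
      moreover have "L \<ge> 0" using L1 by simp
      ultimately have "real (nat \<lceil>log 2 (real m)\<rceil>) \<le> L + 1" by linarith
      then show ?thesis unfolding eta_eq by simp
    qed
    have bad: "pass x \<le> 2 powr (-4 * real n)" if x: "x \<in> S - A" for x
    proof -
      have xS: "x \<in> set xs" using x unfolding S_def by simp
      have "x \<in> Splus (3/4) (set xs)" using x unfolding A_def S_def Splus_def by simp
      then have a2x: "a2 x \<le> p2" "0 \<le> a2 x" using h4 a01 xS by auto
      define k where "k = phase_size n p2 \<eta>"
      have mem: "pmf (maj_test k (a2 x)) True \<in> set (map (\<lambda>(k,p). pmf (maj_test k p) True) (T x))"
        unfolding T_def mod_tests_def k_def \<eta>_def using eta1 unfolding \<eta>_def by force
      have "pass x = prod_list (map (\<lambda>(k,p). pmf (maj_test k p) True) (T x))"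
        unfolding pass_def by (rule run_tests_True)
      also have "\<dots> \<le> pmf (maj_test k (a2 x)) True"
        by (rule prod_list_le_member[OF mem]) (auto simp: pmf_le_1)
      also have "\<dots> \<le> exp (- (2 * 2^\<eta> * ln (real n)))"
        using a2x assms phase_exp[of n p2 \<eta>] n2 unfolding k_def
        by (intro maj_hi') (auto simp: phase_size_def)
      also have "\<dots> \<le> exp (- (4 * (real m * ln (real n))))"
        using eta_pow lnpos by (simp add: mult_right_mono)
      also have "\<dots> = 2 powr (-4 * real n)" unfolding mln powr_def by simp
      finally show ?thesis .
    qed
    define \<beta> where "\<beta> = exp (- (8 * ln (real n))) + real \<eta> * exp (- (4 * ln (real n)))"
    have good: "1 - pass x \<le> \<beta>" if x: "x \<in> G" for x
    proof -
      have xS: "x \<in> set xs" using x unfolding G_def S_def Sminus_def by simp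
      have "x \<in> Sminus (1/3) (set xs)" using x Sminus_mono[of "1/6" "1/3" "set xs"] unfolding G_def S_def by auto
      then have a2x: "a2 x \<ge> 1 - p2" "a2 x \<le> 1" using h3 a01 xS by auto
      have a1x: "a1 x \<ge> 1 - p1" "a1 x \<le> 1" using h1 a01 xS x unfolding G_def S_def by auto
      define g where "g = (\<lambda>(k,p). pmf (maj_test k p) True)"
      have g01: "\<forall>u\<in>set (map g (T x)). 0 \<le> u \<and> u \<le> 1" unfolding g_def by (auto simp: pmf_le_1)
      have "pass x = prod_list (map g (T x))"
        unfolding pass_def g_def by (rule run_tests_True)
      then have "1 - pass x \<le> sum_list (map (\<lambda>u. 1 - u) (map g (T x)))"
        using one_minus_prod_list[OF g01] by simp
      also have "\<dots> = (1 - pmf (maj_test (prelim_size n p1) (a1 x)) True)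
          + (\<Sum>i = 1..<\<eta> + 1. 1 - pmf (maj_test (phase_size n p2 i) (a2 x)) True)"
      proof -
        have "sum_list (map (\<lambda>u. 1 - u) (map g (T x))) = (1 - pmf (maj_test (prelim_size n p1) (a1 x)) True)
          + sum_list (map (\<lambda>i. 1 - pmf (maj_test (phase_size n p2 i) (a2 x)) True) [1..<\<eta> + 1])"
          unfolding T_def mod_tests_def g_def \<eta>_def by (simp add: o_def del: upt_Suc)
        also have "sum_list (map (\<lambda>i. 1 - pmf (maj_test (phase_size n p2 i) (a2 x)) True) [1..<\<eta> + 1])
           = (\<Sum>i = 1..<\<eta> + 1. 1 - pmf (maj_test (phase_size n p2 i) (a2 x)) True)"
          by (simp only: interv_sum_list_conv_sum_set_nat set_upt)
        finally show ?thesis .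
      qed
      also have "\<dots> \<le> exp (- (8 * ln (real n))) + (\<Sum>i = 1..<\<eta> + 1. exp (- (4 * ln (real n))))"
      proof (rule add_mono)
        show "1 - pmf (maj_test (prelim_size n p1) (a1 x)) True \<le> exp (- (8 * ln (real n)))"
          using a1x assms prelim_exp[of n p1] n2 by (intro maj_lo') (auto simp: prelim_size_def)
        show "(\<Sum>i = 1..<\<eta> + 1. 1 - pmf (maj_test (phase_size n p2 i) (a2 x)) True)
           \<le> (\<Sum>i = 1..<\<eta> + 1. exp (- (4 * ln (real n))))"
        proof (rule sum_mono)
          fix i assume i: "i \<in> {1..<\<eta> + 1}"
          have "1 - pmf (maj_test (phase_size n p2 i) (a2 x)) True \<le> exp (- (2 * 2^i * ln (real n)))"
            using a2x assms phase_exp[of n p2 i] n2 by (intro maj_lo') (auto simp: phase_size_def)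
          also have "\<dots> \<le> exp (- (4 * ln (real n)))"
          proof -
            have "(2::real) ^ i \<ge> 2 ^ 1" using i by (intro power_increasing) auto
            then have "4 * ln (real n) \<le> 2 * 2^i * ln (real n)" using lnpos by simp
            then show ?thesis by simp
          qed
          finally show "1 - pmf (maj_test (phase_size n p2 i) (a2 x)) True \<le> exp (- (4 * ln (real n)))" .
        qed
      qed
      also have "\<dots> = \<beta>" unfolding \<beta>_def by simp
      finally show ?thesis .
    qed
    have beta_le: "\<beta> \<le> real n powr -2"
    proof -
      have "exp (- (8 * ln (real n))) = real n powr -8" using nr by (simp add: powr_def)
      moreover have "exp (- (4 * ln (real n))) = real n powr -4" using nr by (simp add: powr_def)
      ultimately have "\<beta> = real n powr -8 + real \<eta> * real n powr -4" unfolding \<beta>_def by simp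
      also have "\<dots> \<le> real n powr -8 + (2 + L) * real n powr -4"
        using eta_le by (intro add_left_mono mult_right_mono) auto
      also have "\<dots> \<le> real n powr -2" using E1 unfolding L_def .
      finally show ?thesis .
    qed
    have beta0: "\<beta> \<ge> 0" unfolding \<beta>_def by simp
    have cardG: "real (card G) \<ge> real m / 6"
    proof -
      have "card G = min m (nat \<lceil>1/6 * real m\<rceil>)" unfolding G_def using card_Sminus[OF finS] cardS by simp
      moreover have "real (nat \<lceil>1/6 * real m\<rceil>) \<ge> real m / 6" by linarith
      ultimately show ?thesis using mpos
        by (cases "m \<le> nat \<lceil>1/6 * real m\<rceil>") (simp_all add: min_def)
    qed
    have "1 - measure_pmf.prob (multi_phase T xs) (Some ` A) \<le>
        (\<Sum>x\<in>S - A. pass x) + (\<Prod>x\<in>S \<inter> G. 1 - pass x)"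
      unfolding pass_def S_def using multi_phase_bound[OF dist GA] .
    also have "(\<Sum>x\<in>S - A. pass x) \<le> real n * 2 powr (-4 * real n)"
    proof -
      have "(\<Sum>x\<in>S - A. pass x) \<le> real (card (S - A)) * 2 powr (-4 * real n)"
        using bad by (rule sum_bounded_above)
      also have "\<dots> \<le> real n * 2 powr (-4 * real n)"
      proof (intro mult_right_mono)
        have "card (S - A) \<le> card S" using finS by (intro card_mono) auto
        then show "real (card (S - A)) \<le> real n" using cardS mle by linarith
      qed simp
      finally show ?thesis .
    qed
    also have "(\<Prod>x\<in>S \<inter> G. 1 - pass x) \<le> 2 powr (- real n / 3)"
    proof -
      have SG: "S \<inter> G = G" unfolding G_def Sminus_def by auto
      have "(\<Prod>x\<in>S \<inter> G. 1 - pass x) \<le> (\<Prod>x\<in>G. \<beta>)"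
        unfolding SG using good by (intro prod_mono) (auto simp: pass_def pmf_le_1)
      also have "\<dots> = \<beta> ^ card G" by simp
      also have "\<dots> \<le> (real n powr -2) ^ card G" using beta0 beta_le by (intro power_mono)
      also have "\<dots> = real n powr (-2 * real (card G))"
        using nr by (simp add: powr_realpow[symmetric] powr_powr)
      also have "\<dots> \<le> real n powr (-2 * (real m / 6))"
        using cardG nr by (intro powr_mono) auto
      also have "\<dots> = exp (- (real m * ln (real n)) / 3)"
        using nr by (simp add: powr_def)
      also have "\<dots> = 2 powr (- real n / 3)" unfolding mln powr_def by simp
      finally show ?thesis .
    qed
    finally have "1 - measure_pmf.prob (multi_phase T xs) (Some ` A) \<le> 2 powr (- real n / 5)"
      using E2 by simp
    then show "measure_pmf.prob (multi_phase (mod_tests n p1 p2 a1 a2) xs) (Some ` Sminus (3/4) (set xs))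
       \<ge> 1 - 2 powr (- real n / 5)" unfolding T_def A_def S_def by simp
  qed
qed

end
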